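(* Let $f$ be an injective coloring of a graph $G$. If a walk $W=\langle w_1,\dots,w_{|W|}\rangle$ in $G$ corresponds to a swapping sequence from $f$ to $f$ itself, then $|V(W)|\le (|W|+1)/2$, where $V(W)$ is the set of distinct vertices appearing in $W$ and $|W|$ is the number of entries of the walk.
   Context: A walk $\langle w_1,\dots,w_p\rangle$ corresponds to a swapping sequence $\langle f_1,\dots,f_p\rangle$ from $f=f_1$ to $f_p$ if for $2\le i\le p$, $f_i$ is obtained from $f_{i-1}$ by swapping the colors of $w_{i-1}$ and $w_i$, i.e. $f_i(w_i)=f_{i-1}(w_{i-1})$, $f_i(w_{i-1})=f_{i-1}(w_i)$, and $f_i(v)=f_{i-1}(v)$ for other $v$. *)

theory Defs
  imports Complex_Main
begin

definition simple_graph :: "'a set \<Rightarrow> ('a \<Rightarrow> 'a \<Rightarrow> bool) \<Rightarrow> bool" where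
  "simple_graph V E \<longleftrightarrow>
     (\<forall>u v. E u v \<longrightarrow> u \<in> V \<and> v \<in> V) \<and>
     (\<forall>u v. E u v \<longrightarrow> E v u) \<and> (\<forall>v. \<not> E v v)"

definition is_walk :: "'a set \<Rightarrow> ('a \<Rightarrow> 'a \<Rightarrow> bool) \<Rightarrow> 'a list \<Rightarrow> bool" where
  "is_walk V E ws \<longleftrightarrow> ws \<noteq> [] \<and> set ws \<subseteq> V \<and>
     (\<forall>i. Suc i < length ws \<longrightarrow> E (ws ! i) (ws ! Suc i))"

definition injective_coloring :: "'a set \<Rightarrow> ('a \<Rightarrow> 'c) \<Rightarrow> bool" where
  "injective_coloring V f \<longleftrightarrow> inj_on f V"

text \<open>The walk ws = w_1..w_p corresponds to the swapping sequence fs = f_1..f_p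
  (indices shifted to start at 0): f_i is obtained from f_(i-1) by swapping
  the colors of w_(i-1) and w_i.\<close>
definition corresponds_swapping :: "'a list \<Rightarrow> ('a \<Rightarrow> 'c) list \<Rightarrow> bool" where
  "corresponds_swapping ws fs \<longleftrightarrow> length fs = length ws \<and>
     (\<forall>i. 0 < i \<and> i < length ws \<longrightarrow>
        (fs ! i) (ws ! i) = (fs ! (i - 1)) (ws ! (i - 1)) \<and>
        (fs ! i) (ws ! (i - 1)) = (fs ! (i - 1)) (ws ! i) \<and>
        (\<forall>v. v \<noteq> ws ! i \<and> v \<noteq> ws ! (i - 1) \<longrightarrow> (fs ! i) v = (fs ! (i - 1)) v))"

definition walk_swaps :: "'a list \<Rightarrow> ('a \<Rightarrow> 'c) \<Rightarrow> ('a \<Rightarrow> 'c) \<Rightarrow> bool" where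
  "walk_swaps ws f g \<longleftrightarrow> (\<exists>fs. corresponds_swapping ws fs \<and> fs \<noteq> [] \<and>
      hd fs = f \<and> last fs = g)"

end

theory Submission
  imports Defs
begin

theorem lemma7:
  fixes V :: "'a set" and E :: "'a \<Rightarrow> 'a \<Rightarrow> bool"
    and f :: "'a \<Rightarrow> 'c" and ws :: "'a list"
  assumes "simple_graph V E"
    and "injective_coloring V f"
    and "is_walk V E ws"
    and "walk_swaps ws f f"
  shows "real (card (set ws)) \<le> (real (length ws) + 1) / 2"
proof -
  obtain fs where cs: "corresponds_swapping ws fs" and ne: "fs \<noteq> []"
    and hd: "hd fs = f" and la: "last fs = f"
    using assms(4) unfolding walk_swaps_def by blast
  define p where "p = length ws"
  define F where "F = (\<lambda>i. fs ! i)"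
  define w where "w = (\<lambda>i. ws ! i)"
  have lfs: "length fs = p" using cs unfolding corresponds_swapping_def p_def by simp
  have wne: "ws \<noteq> []" and wV: "set ws \<subseteq> V"
    and adj: "\<And>i. Suc i < p \<Longrightarrow> E (w i) (w (Suc i))"
    using assms(3) unfolding is_walk_def p_def w_def by auto
  have p0: "p > 0" using wne p_def by simp
  have irr: "\<And>v. \<not> E v v" using assms(1) unfolding simple_graph_def by blast
  have inj: "inj_on f V" using assms(2) unfolding injective_coloring_def .
  have step: "\<And>i. 0 < i \<Longrightarrow> i < p \<Longrightarrow>
        F i (w i) = F (i - 1) (w (i - 1)) \<and>
        F i (w (i - 1)) = F (i - 1) (w i) \<and>
        (\<forall>v. v \<noteq> w i \<and> v \<noteq> w (i - 1) \<longrightarrow> F i v = F (i - 1) v)"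
    using cs unfolding corresponds_swapping_def F_def w_def p_def by blast
  have F0: "F 0 = f" using hd ne unfolding F_def by (simp add: hd_conv_nth)
  have Fl: "F (p - 1) = f" using la ne lfs unfolding F_def by (simp add: last_conv_nth)
  have wV': "\<And>i. i < p \<Longrightarrow> w i \<in> V" using wV unfolding w_def p_def by auto
  have blank: "\<And>i. i < p \<Longrightarrow> F i (w i) = f (w 0)"
  proof -
    fix i show "i < p \<Longrightarrow> F i (w i) = f (w 0)"
    proof (induction i)
      case 0 then show ?case using F0 by simp
    next
      case (Suc i)
      then show ?case using step[of "Suc i"] by simp
    qed
  qed
  define S where "S = (\<lambda>v. {i. 0 < i \<and> i < p \<and> F (i - 1) (w i) = f v})"
  define U where "U = set ws - {w 0}"
  have two: "2 \<le> card (S v)" if vU: "v \<in> U" for v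
  proof -
    have "\<exists>i. i < p \<and> w i = v" using vU unfolding U_def w_def p_def
      by (auto simp: in_set_conv_nth)
    define i1 where "i1 = (LEAST i. i < p \<and> w i = v)"
    have i1: "i1 < p" "w i1 = v"
      using LeastI_ex[OF \<open>\<exists>i. i < p \<and> w i = v\<close>] unfolding i1_def by auto
    have i1min: "\<And>j. j < i1 \<Longrightarrow> w j \<noteq> v"
      using not_less_Least i1(1) unfolding i1_def
      by (metis (mono_tags, lifting) order.strict_trans)
    have vne: "v \<noteq> w 0" using vU unfolding U_def by simp
    have i1pos: "0 < i1" using i1 vne by (cases i1) auto
    have vV: "v \<in> V" using i1 wV' by blast
    have w0V: "w 0 \<in> V" using wV' p0 by blast
    have before: "j < i1 \<Longrightarrow> F j v = f v" for j
    proof (induction j)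
      case 0 then show ?case using F0 by simp
    next
      case (Suc j)
      have "F (Suc j) v = F j v"
        using step[of "Suc j"] i1min[of "Suc j"] i1min[of j] Suc.prems i1(1) by auto
      then show ?case using Suc by simp
    qed
    have in1: "i1 \<in> S v"
      using before[of "i1 - 1"] i1 i1pos unfolding S_def by simp
    define x where "x = w (i1 - 1)"
    have si: "Suc (i1 - 1) = i1" using i1pos by simp
    have "E x v" using adj[of "i1 - 1"] i1 unfolding si x_def by simp
    then have xne: "x \<noteq> v" using irr by blast
    have xV: "x \<in> V" using wV' i1 unfolding x_def by simp
    have "\<exists>i2. i1 < i2 \<and> i2 \<in> S v"
    proof (rule ccontr)
      assume nn: "\<not> (\<exists>i2. i1 < i2 \<and> i2 \<in> S v)"
      have stay: "i1 + d < p \<Longrightarrow> F (i1 + d) x = f v" for d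
      proof (induction d)
        case 0
        show ?case using step[of i1] i1 i1pos before[of "i1 - 1"] unfolding x_def by simp
      next
        case (Suc d)
        let ?i = "Suc (i1 + d)"
        have IH: "F (i1 + d) x = f v" using Suc by simp
        have nm: "F (i1 + d) (w ?i) \<noteq> f v" using nn Suc.prems unfolding S_def by auto
        have bl: "F (i1 + d) (w (i1 + d)) = f (w 0)" using blank Suc.prems by simp
        have fne: "f (w 0) \<noteq> f v" using inj vV w0V vne inj_on_eq_iff by metis
        have "x \<noteq> w ?i" using IH nm by auto
        moreover have "x \<noteq> w (i1 + d)" using IH bl fne by auto
        ultimately have "F ?i x = F (i1 + d) x" using step[of ?i] Suc.prems by auto
        then show ?case using IH by simp
      qed
      have "F (p - 1) x = f v" using stay[of "p - 1 - i1"] i1 by simp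
      then have "f x = f v" using Fl by simp
      then show False using inj xV vV xne inj_on_eq_iff by metis
    qed
    then obtain i2 where "i1 < i2" "i2 \<in> S v" by blast
    moreover have "finite (S v)" unfolding S_def by simp
    ultimately have "{i1, i2} \<subseteq> S v" "card {i1, i2} = 2" using in1 by auto
    then show ?thesis using \<open>finite (S v)\<close> by (metis card_mono)
  qed
  have fU: "finite U" unfolding U_def by simp
  have disj: "\<forall>a\<in>U. \<forall>b\<in>U. a \<noteq> b \<longrightarrow> S a \<inter> S b = {}"
  proof (intro ballI impI)
    fix a b assume "a \<in> U" "b \<in> U" "a \<noteq> b"
    then have "f a \<noteq> f b" using inj wV unfolding U_def by (meson DiffD1 inj_on_eq_iff subsetD)
    then show "S a \<inter> S b = {}" unfolding S_def by auto
  qed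
  have "card (\<Union>v\<in>U. S v) = (\<Sum>v\<in>U. card (S v))"
    by (rule card_UN_disjoint) (use fU disj in \<open>auto simp: S_def\<close>)
  moreover have "(\<Sum>v\<in>U. card (S v)) \<ge> (\<Sum>v\<in>U. 2)" using two by (rule sum_mono)
  moreover have "(\<Union>v\<in>U. S v) \<subseteq> {1..<p}" unfolding S_def by auto
  then have "card (\<Union>v\<in>U. S v) \<le> p - 1" using card_mono[OF finite_atLeastLessThan] by (metis card_atLeastLessThan)
  moreover have "card U = card (set ws) - 1"
    unfolding U_def using wne p0 unfolding w_def by (simp add: card_Diff_singleton)
  moreover have "card (set ws) \<ge> 1" using wne by (simp add: Suc_leI card_gt_0_iff)
  ultimately have "2 * (card (set ws) - 1) \<le> p - 1" by simp
  then have "2 * card (set ws) \<le> p + 1" using p0 \<open>card (set ws) \<ge> 1\<close> by linarith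
  then show ?thesis unfolding p_def by simp
qed

end
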